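(* Let $P$ be a finite set of real numbers with $0\in P$, and let $a=(a_n)$ be a sequence of real numbers such that $\sum_n a_n$ is absolutely convergent and $|a_n|\ge|a_{n+1}|>0$ for all $n\in\mathbb N$. Then there exists a sequence $((x_n,y_n))_n$ in $\mathbb R^2$ with $\sum_n(|x_n|+|y_n|)<\infty$ such that $E(x_n,y_n)_0=S(P,a)$.
   Context: For an absolutely convergent series $\sum_n v_n$ in $\mathbb R^2$, its achievement set is $E(v_n)=\{\sum_{n=1}^\infty \varepsilon_n v_n : (\varepsilon_n)\in\{0,1\}^{\mathbb N}\}$; $E(x_n,y_n)$ denotes the achievement set of $((x_n,y_n))_n$. For $A\subset\mathbb R^2$ and $c\in\mathbb R$, $A_c=\{s\in\mathbb R:(s,c)\in A\}$. The set of $P$-sums is $S(P,a)=\{\sum_{n=1}^\infty \varepsilon_n a_n : (\varepsilon_n)\in P^{\mathbb N}\}$. *)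

theory Defs
  imports "HOL-Analysis.Analysis"
begin

definition achievement_set :: "(nat \<Rightarrow> real \<times> real) \<Rightarrow> (real \<times> real) set" where
  "achievement_set v = {(\<Sum>n. \<epsilon> n *\<^sub>R v n) | \<epsilon>. \<forall>n. \<epsilon> n \<in> {0, 1}}"

definition section_at :: "(real \<times> real) set \<Rightarrow> real \<Rightarrow> real set" where
  "section_at A c = {s. (s, c) \<in> A}"

definition P_sums :: "real set \<Rightarrow> (nat \<Rightarrow> real) \<Rightarrow> real set" where
  "P_sums P a = {(\<Sum>n. \<epsilon> n * a n) | \<epsilon>. \<forall>n. \<epsilon> n \<in> P}"

end

theory Submission imports Defs begin

lemma sums_pair_iff:
  fixes f :: "nat \<Rightarrow> real \<times> real"
  shows "f sums (s,t) \<longleftrightarrow> (\<lambda>n. fst (f n)) sums s \<and> (\<lambda>n. snd (f n)) sums t"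
proof
  assume h: "f sums (s,t)"
  have "(\<lambda>n. fst (sum f {..<n})) \<longlonglongrightarrow> s" using tendsto_fst[OF h[unfolded sums_def]] by simp
  moreover have "(\<lambda>n. snd (sum f {..<n})) \<longlonglongrightarrow> t" using tendsto_snd[OF h[unfolded sums_def]] by simp
  ultimately show "(\<lambda>n. fst (f n)) sums s \<and> (\<lambda>n. snd (f n)) sums t"
    unfolding sums_def by (simp add: fst_sum snd_sum)
next
  assume h: "(\<lambda>n. fst (f n)) sums s \<and> (\<lambda>n. snd (f n)) sums t"
  have "(\<lambda>n. (fst (sum f {..<n}), snd (sum f {..<n}))) \<longlonglongrightarrow> (s,t)"
    using tendsto_Pair[of "\<lambda>n. fst (sum f {..<n})" s sequentially "\<lambda>n. snd (sum f {..<n})" t] h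
    unfolding sums_def by (simp add: fst_sum snd_sum)
  then show "f sums (s,t)" unfolding sums_def by simp
qed

lemma blk:
  fixes f :: "nat \<Rightarrow> 'a::comm_monoid_add"
  shows "(\<Sum>N\<in>{n*K..<n*K+K}. f N) = (\<Sum>j<K. f (n*K+j))"
  using sum.shift_bounds_nat_ivl[of f 0 "n*K" K] by (simp add: atLeast0LessThan add.commute)

lemma sum_div_block:
  fixes g :: "nat \<Rightarrow> real"
  assumes "0 < K"
  shows "(\<Sum>N<n*K. g (N div K)) = of_nat K * (\<Sum>i<n. g i)"
proof (induction n)
  case 0 then show ?case by simp
next
  case (Suc n)
  have "{..<Suc n * K} = {..<n*K} \<union> {n*K..<n*K+K}" by auto
  then have "(\<Sum>N<Suc n*K. g (N div K)) = (\<Sum>N<n*K. g (N div K)) + (\<Sum>N\<in>{n*K..<n*K+K}. g (N div K))"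
    by (simp add: sum.union_disjoint ivl_disj_int)
  also have "(\<Sum>N\<in>{n*K..<n*K+K}. g (N div K)) = (\<Sum>j<K. g ((n*K+j) div K))" by (rule blk)
  also have "\<dots> = (\<Sum>j<K. g n)" using assms by (intro sum.cong) auto
  finally show ?case using Suc by (simp add: algebra_simps)
qed

lemma summable_div_block:
  fixes g :: "nat \<Rightarrow> real"
  assumes "0 < K" "summable g" "\<And>n. g n \<ge> 0"
  shows "summable (\<lambda>N. g (N div K))"
proof (rule bounded_imp_summable)
  fix n
  have "(\<Sum>k\<le>n. g (k div K)) \<le> (\<Sum>k<Suc n * K. g (k div K))"
  proof (intro sum_mono2)
    have "n * 1 \<le> n * K" using assms(1) by (intro mult_le_mono2) simp
    then have "n < Suc n * K" using assms(1) by (simp only: mult_Suc)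
    then show "{..n} \<subseteq> {..<Suc n * K}" by auto
  qed (use assms in auto)
  also have "\<dots> = of_nat K * (\<Sum>i<Suc n. g i)" by (rule sum_div_block[OF assms(1)])
  also have "\<dots> \<le> of_nat K * suminf g"
    using assms by (intro mult_left_mono sum_le_suminf) auto
  finally show "(\<Sum>k\<le>n. g (k div K)) \<le> of_nat K * suminf g" .
qed (use assms in auto)

lemma unique_digits:
  fixes c :: "nat \<Rightarrow> real" and r M :: real
  assumes ci: "\<And>n. c n \<in> \<int>" and cb: "\<And>n. \<bar>c n\<bar> \<le> M"
    and s: "(\<lambda>n. c n * r^n) sums 0" and r: "0 < r" "M * r < 1 - r"
  shows "c n = 0"
proof (rule ccontr)
  assume "c n \<noteq> 0"
  define n0 where "n0 = (LEAST n. c n \<noteq> 0)"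
  have c0: "c n0 \<noteq> 0" unfolding n0_def by (rule LeastI[of _ n], fact)
  have cz: "c i = 0" if "i < n0" for i using that not_less_Least n0_def by blast
  have r1: "r < 1" using r cb[of 0] by (smt (verit) mult_nonneg_nonneg)
  have "(\<lambda>i. c (i + Suc n0) * r^(i + Suc n0)) sums (0 - (\<Sum>i<Suc n0. c i * r^i))"
    using sums_split_initial_segment[OF s, of "Suc n0"] by simp
  also have "(\<Sum>i<Suc n0. c i * r^i) = c n0 * r^n0"
    using cz by (simp add: sum.lessThan_Suc)
  finally have tl: "(\<lambda>i. c (i + Suc n0) * r^(i + Suc n0)) sums (- (c n0 * r^n0))" by simp
  have g: "(\<lambda>i. M * r^(Suc n0) * r^i) sums (M * r^(Suc n0) * (1 / (1 - r)))"
    using geometric_sums[of r] r r1 by (intro sums_mult) auto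
  have b1: "c (i + Suc n0) * r^(i + Suc n0) \<le> M * r^(Suc n0) * r^i" for i
  proof -
    have "c (i + Suc n0) * r^(i + Suc n0) \<le> \<bar>c (i + Suc n0)\<bar> * r^(i + Suc n0)"
      using r by (intro mult_right_mono) auto
    also have "\<dots> \<le> M * r^(i + Suc n0)" using r cb by (intro mult_right_mono) auto
    finally show ?thesis by (simp add: power_add algebra_simps)
  qed
  have b2: "- (c (i + Suc n0) * r^(i + Suc n0)) \<le> M * r^(Suc n0) * r^i" for i
  proof -
    have "- c (i + Suc n0) * r^(i + Suc n0) \<le> \<bar>c (i + Suc n0)\<bar> * r^(i + Suc n0)"
      using r by (intro mult_right_mono) auto
    also have "\<dots> \<le> M * r^(i + Suc n0)" using r cb by (intro mult_right_mono) auto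
    finally show ?thesis by (simp add: power_add algebra_simps)
  qed
  have "- (c n0 * r^n0) \<le> M * r^(Suc n0) * (1 / (1 - r))" by (rule sums_le[OF b1 tl g])
  moreover have "c n0 * r^n0 \<le> M * r^(Suc n0) * (1 / (1 - r))"
    using sums_le[OF b2 sums_minus[OF tl] g] by simp
  ultimately have "\<bar>c n0\<bar> * r^n0 \<le> M * r^(Suc n0) * (1 / (1 - r))"
    using r by (cases "c n0 \<ge> 0") auto
  moreover have "1 \<le> \<bar>c n0\<bar>"
  proof -
    obtain z where z: "c n0 = of_int z" using ci[of n0] by (auto elim: Ints_cases)
    then have "z \<noteq> 0" using c0 by auto
    then have "1 \<le> \<bar>z\<bar>" by linarith
    then show ?thesis using z by (metis of_int_1_le_iff of_int_abs)
  qed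
  moreover have "M * r^(Suc n0) * (1 / (1 - r)) < r^n0"
  proof -
    have "M * r / (1 - r) < 1" using r r1 by (simp add: divide_simps)
    then have "r^n0 * (M * r / (1 - r)) < r^n0 * 1" using r by (intro mult_strict_left_mono) auto
    then show ?thesis by (simp add: algebra_simps)
  qed
  moreover have "1 * r^n0 \<le> \<bar>c n0\<bar> * r^n0"
    using calculation(2) r by (intro mult_right_mono) auto
  ultimately show False by linarith
qed

theorem theorem4p1:
  fixes P :: "real set" and a :: "nat \<Rightarrow> real"
  assumes "finite P" and "0 \<in> P"
    and "summable (\<lambda>n. \<bar>a n\<bar>)"
    and "\<forall>n. \<bar>a n\<bar> \<ge> \<bar>a (Suc n)\<bar> \<and> \<bar>a (Suc n)\<bar> > 0"
  shows "\<exists>x y :: nat \<Rightarrow> real. summable (\<lambda>n. \<bar>x n\<bar> + \<bar>y n\<bar>) \<and>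
           section_at (achievement_set (\<lambda>n. (x n, y n))) 0 = P_sums P a"
proof -
  obtain ps where ps: "distinct ps" "set ps = P - {0}"
    using assms(1) by (metis distinct_sorted_list_of_set finite_Diff set_sorted_list_of_set)
  define m where "m = length ps"
  define K where "K = Suc m"
  define r :: real where "r = 1 / (real m + 3)"
  define x where "x = (\<lambda>N. if N mod K < m then ps!(N mod K) * a (N div K) else 0)"
  define y where "y = (\<lambda>N. if N mod K < m then r^(N div K) else - (r^(N div K)))"
  define C where "C = Max (abs ` P)"
  have K0: "0 < K" unfolding K_def by simp
  have r0: "0 < r" "r < 1" unfolding r_def by auto
  have pC: "\<bar>p\<bar> \<le> C" if "p \<in> P" for p
    unfolding C_def using assms(1) that by (intro Max_ge) auto
  have C0: "0 \<le> C" using pC[OF assms(2)] by simp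
  have psP: "ps!j \<in> P" "ps!j \<noteq> 0" if "j < m" for j
    using that ps unfolding m_def by (metis DiffE insertI1 nth_mem)+
  have modK: "(n*K+j) mod K = j" "(n*K+j) div K = n" if "j < K" for n j
    using that K0 by auto
  define g where "g = (\<lambda>n. C * \<bar>a n\<bar> + r^n)"
  have gs: "summable g" unfolding g_def
    using assms(3) r0 by (intro summable_add summable_mult summable_geometric) auto
  have gK: "summable (\<lambda>N. g (N div K))"
    by (rule summable_div_block[OF K0 gs]) (use C0 r0 in \<open>auto simp: g_def\<close>)
  have xyb: "\<bar>x N\<bar> + \<bar>y N\<bar> \<le> g (N div K)" for N
  proof (cases "N mod K < m")
    case True
    have "\<bar>ps!(N mod K)\<bar> * \<bar>a (N div K)\<bar> \<le> C * \<bar>a (N div K)\<bar>"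
      using pC[OF psP(1)[OF True]] by (intro mult_right_mono) auto
    then show ?thesis using True r0 unfolding x_def y_def g_def by (simp add: abs_mult)
  next
    case False
    then show ?thesis using C0 r0 unfolding x_def y_def g_def by simp
  qed
  have sxy: "summable (\<lambda>N. \<bar>x N\<bar> + \<bar>y N\<bar>)"
    by (rule summable_comparison_test'[OF gK]) (use xyb in auto)
  have sx: "summable (\<lambda>N. \<bar>x N\<bar>)"
    by (rule summable_comparison_test'[OF sxy]) auto
  have sy: "summable (\<lambda>N. \<bar>y N\<bar>)"
    by (rule summable_comparison_test'[OF sxy]) auto
  have blocks: "suminf (\<lambda>N. e N *\<^sub>R (x N, y N)) = (suminf (\<lambda>N. e N * x N), suminf (\<lambda>N. e N * y N))
      \<and> (\<lambda>n. (\<Sum>j<m. e (n*K+j) * ps!j) * a n) sums suminf (\<lambda>N. e N * x N)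
      \<and> (\<lambda>n. ((\<Sum>j<m. e (n*K+j)) - e (n*K+m)) * r^n) sums suminf (\<lambda>N. e N * y N)"
    if e: "\<And>N. e N \<in> {0,1}" for e :: "nat \<Rightarrow> real"
  proof -
    have eb: "\<bar>e N\<bar> \<le> 1" for N using e[of N] by auto
    have sex: "summable (\<lambda>N. e N * x N)"
      by (rule summable_comparison_test'[OF sx]) (use eb in \<open>auto simp: abs_mult intro: mult_left_le_one_le\<close>)
    have sey: "summable (\<lambda>N. e N * y N)"
      by (rule summable_comparison_test'[OF sy]) (use eb in \<open>auto simp: abs_mult intro: mult_left_le_one_le\<close>)
    have "(\<lambda>N. e N *\<^sub>R (x N, y N)) sums (suminf (\<lambda>N. e N * x N), suminf (\<lambda>N. e N * y N))"
      unfolding sums_pair_iff using sex sey by (simp add: summable_sums)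
    then have 1: "suminf (\<lambda>N. e N *\<^sub>R (x N, y N)) = (suminf (\<lambda>N. e N * x N), suminf (\<lambda>N. e N * y N))"
      by (rule sums_unique[symmetric])
    have gx: "(\<lambda>n. sum (\<lambda>N. e N * x N) {n*K..<n*K+K}) sums suminf (\<lambda>N. e N * x N)"
      by (rule sums_group[OF summable_sums[OF sex] K0])
    have gy: "(\<lambda>n. sum (\<lambda>N. e N * y N) {n*K..<n*K+K}) sums suminf (\<lambda>N. e N * y N)"
      by (rule sums_group[OF summable_sums[OF sey] K0])
    have bx: "sum (\<lambda>N. e N * x N) {n*K..<n*K+K} = (\<Sum>j<m. e (n*K+j) * ps!j) * a n" for n
    proof -
      have "sum (\<lambda>N. e N * x N) {n*K..<n*K+K} = (\<Sum>j<K. e (n*K+j) * x (n*K+j))" by (rule blk)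
      also have "\<dots> = (\<Sum>j<m. e (n*K+j) * x (n*K+j)) + e (n*K+m) * x (n*K+m)"
        unfolding K_def by simp
      also have "e (n*K+m) * x (n*K+m) = 0" using modK[of m n] unfolding x_def K_def by simp
      also have "(\<Sum>j<m. e (n*K+j) * x (n*K+j)) = (\<Sum>j<m. e (n*K+j) * ps!j * a n)"
        by (intro sum.cong refl) (use modK[of _ n] in \<open>auto simp: x_def K_def\<close>)
      finally show ?thesis by (simp add: sum_distrib_right)
    qed
    have by': "sum (\<lambda>N. e N * y N) {n*K..<n*K+K} = ((\<Sum>j<m. e (n*K+j)) - e (n*K+m)) * r^n" for n
    proof -
      have "sum (\<lambda>N. e N * y N) {n*K..<n*K+K} = (\<Sum>j<K. e (n*K+j) * y (n*K+j))" by (rule blk)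
      also have "\<dots> = (\<Sum>j<m. e (n*K+j) * y (n*K+j)) + e (n*K+m) * y (n*K+m)"
        unfolding K_def by simp
      also have "e (n*K+m) * y (n*K+m) = - e (n*K+m) * r^n" using modK[of m n] unfolding y_def K_def by simp
      also have "(\<Sum>j<m. e (n*K+j) * y (n*K+j)) = (\<Sum>j<m. e (n*K+j) * r^n)"
        by (intro sum.cong refl) (use modK[of _ n] in \<open>auto simp: y_def K_def\<close>)
      finally show ?thesis by (simp add: left_diff_distrib sum_distrib_right)
    qed
    show ?thesis using 1 gx gy bx by' by simp
  qed
  have secI: "section_at (achievement_set (\<lambda>n. (x n, y n))) 0 = P_sums P a"
  proof (intro equalityI subsetI)
    fix z assume "z \<in> section_at (achievement_set (\<lambda>n. (x n, y n))) 0"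
    then obtain e :: "nat \<Rightarrow> real" where e: "\<And>N. e N \<in> {0,1}"
      and ez: "(z, 0) = (\<Sum>N. e N *\<^sub>R (x N, y N))"
      unfolding section_at_def achievement_set_def by auto
    note bl = blocks[of e, OF e]
    have z: "z = suminf (\<lambda>N. e N * x N)" and y0: "suminf (\<lambda>N. e N * y N) = 0"
      using ez bl by auto
    define c where "c = (\<lambda>n. (\<Sum>j<m. e (n*K+j)) - e (n*K+m))"
    have e01: "0 \<le> e N" "e N \<le> 1" for N using e[of N] by auto
    have cz: "c n = 0" for n
    proof (rule unique_digits[where r=r and M="real m + 1"])
      have eI: "e N \<in> \<int>" for N
      proof -
        have "e N = 0 \<or> e N = 1" using e[of N] by simp
        then show ?thesis by (metis Ints_0 Ints_1)
      qed
      show "c n \<in> \<int>" for n unfolding c_def using eI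
        by (intro Ints_diff Ints_sum) auto
      show "\<bar>c n\<bar> \<le> real m + 1" for n
      proof -
        have "(\<Sum>j<m. e (n*K+j)) \<le> (\<Sum>j<m. 1)" using e01 by (intro sum_mono) auto
        moreover have "0 \<le> (\<Sum>j<m. e (n*K+j))" using e01 by (intro sum_nonneg) auto
        ultimately show ?thesis unfolding c_def using e01[of "n*K+m"] by auto
      qed
      show "(\<lambda>n. c n * r^n) sums 0" using bl y0 unfolding c_def by simp
      show "0 < r" by (rule r0(1))
      show "(real m + 1) * r < 1 - r" unfolding r_def by (simp add: field_simps)
    qed
    define \<epsilon> where "\<epsilon> = (\<lambda>n. \<Sum>j<m. e (n*K+j) * ps!j)"
    have epsP: "\<epsilon> n \<in> P" for n
    proof (cases "\<exists>j<m. e (n*K+j) = 1")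
      case False
      then have "\<forall>j<m. e (n*K+j) = 0" using e by (auto simp: insert_iff)
      then show ?thesis unfolding \<epsilon>_def using assms(2) by simp
    next
      case True
      then obtain j0 where j0: "j0 < m" "e (n*K+j0) = 1" by auto
      have oth: "e (n*K+j) = 0" if "j < m" "j \<noteq> j0" for j
      proof (rule ccontr)
        assume "e (n*K+j) \<noteq> 0"
        then have ej: "e (n*K+j) = 1" using e by (auto simp: insert_iff)
        have "(\<Sum>j\<in>{j,j0}. e (n*K+j)) \<le> (\<Sum>j<m. e (n*K+j))"
          using that j0 e01 by (intro sum_mono2) auto
        then have "2 \<le> (\<Sum>j<m. e (n*K+j))" using ej j0 that by simp
        moreover have "c n = 0" by (rule cz)
        ultimately show False unfolding c_def using e01[of "n*K+m"] by simp
      qed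
      have "\<epsilon> n = (\<Sum>j<m. if j = j0 then ps!j0 else 0)"
        unfolding \<epsilon>_def by (intro sum.cong refl) (use oth j0 in auto)
      also have "\<dots> = ps!j0" using j0 by simp
      finally show ?thesis using psP(1)[OF j0(1)] by simp
    qed
    have "(\<lambda>n. \<epsilon> n * a n) sums z" using bl z unfolding \<epsilon>_def by simp
    then have "z = (\<Sum>n. \<epsilon> n * a n)" by (rule sums_unique)
    then show "z \<in> P_sums P a" unfolding P_sums_def using epsP by blast
  next
    fix z assume "z \<in> P_sums P a"
    then obtain \<epsilon> where epsP: "\<And>n. \<epsilon> n \<in> P" and z: "z = (\<Sum>n. \<epsilon> n * a n)"
      unfolding P_sums_def by auto
    define e :: "nat \<Rightarrow> real" where "e = (\<lambda>N. if N mod K < m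
        then (if \<epsilon> (N div K) = ps!(N mod K) then 1 else 0)
        else (if \<epsilon> (N div K) = 0 then 0 else 1))"
    have e: "e N \<in> {0,1}" for N unfolding e_def by auto
    note bl = blocks[of e, OF e]
    have key: "(\<Sum>j<m. e (n*K+j) * ps!j) = \<epsilon> n \<and> (\<Sum>j<m. e (n*K+j)) - e (n*K+m) = 0" for n
    proof (cases "\<epsilon> n = 0")
      case True
      have "e (n*K+j) = 0" if "j < m" for j
        using modK[of j n] that psP(2)[OF that] True unfolding e_def K_def by auto
      moreover have "e (n*K+m) = 0" using modK[of m n] True unfolding e_def K_def by auto
      ultimately show ?thesis using True by simp
    next
      case False
      then have "\<epsilon> n \<in> set ps" using ps epsP by auto
      then obtain j0 where j0: "j0 < m" "ps!j0 = \<epsilon> n" unfolding m_def by (auto simp: in_set_conv_nth)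
      have ej: "e (n*K+j) = (if j = j0 then 1 else 0)" if "j < m" for j
        using modK[of j n] that j0 nth_eq_iff_index_eq[OF ps(1), of j j0] unfolding e_def K_def m_def
        by auto
      have em: "e (n*K+m) = 1" using modK[of m n] False unfolding e_def K_def by auto
      have "(\<Sum>j<m. e (n*K+j) * ps!j) = (\<Sum>j<m. if j = j0 then ps!j0 else 0)"
        by (intro sum.cong refl) (auto simp: ej)
      moreover have "(\<Sum>j<m. e (n*K+j)) = (\<Sum>j<m. if j = j0 then 1 else 0)"
        by (intro sum.cong refl) (auto simp: ej)
      ultimately show ?thesis using j0 em by simp
    qed
    have "(\<lambda>n. \<epsilon> n * a n) sums suminf (\<lambda>N. e N * x N)" using bl key by simp
    then have zx: "z = suminf (\<lambda>N. e N * x N)" using z sums_unique by metis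
    have "(\<lambda>n. 0::real) sums suminf (\<lambda>N. e N * y N)" using bl key by simp
    then have y0: "suminf (\<lambda>N. e N * y N) = 0" using sums_unique sums_zero by metis
    have "(z, 0) = (\<Sum>N. e N *\<^sub>R (x N, y N))" using bl zx y0 by simp
    then show "z \<in> section_at (achievement_set (\<lambda>n. (x n, y n))) 0"
      unfolding section_at_def achievement_set_def using e by blast
  qed
  show ?thesis using sxy secI by blast
qed

end
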